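(* Let $\lambda_1,\dots,\lambda_n$ be positive integers, $L=\mathrm{lcm}(\lambda_1,\dots,\lambda_n)$, and $\Lambda=\langle1/\lambda_1,\dots,1/\lambda_n\rangle$ the additive submonoid of $\mathbb{Q}_{\ge}$ they generate. If $\Lambda$ is quasinormal, then $1+1/L\in\Lambda$.
   Context: A submonoid $S$ of $\mathbb{Q}_{\ge}$ is quasinormal if whenever $x\in S$ and $x\ge p$ for a positive integer $p$, there exist $y_1,\dots,y_p\in S$ with $y_i\ge1$ for all $i$ and $x=y_1+\cdots+y_p$. *)

theory Defs
  imports Main "HOL.Rat"
begin

definition gen_monoid :: "nat \<Rightarrow> (nat \<Rightarrow> nat) \<Rightarrow> rat set" where
  "gen_monoid n lam = {(\<Sum>i<n. of_nat (c i) / of_nat (lam i)) | c :: nat \<Rightarrow> nat. True}"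

definition quasinormal :: "rat set \<Rightarrow> bool" where
  "quasinormal S \<longleftrightarrow>
     (\<forall>x\<in>S. \<forall>p::nat. p > 0 \<and> x \<ge> of_nat p \<longrightarrow>
        (\<exists>y :: nat \<Rightarrow> rat. (\<forall>i<p. y i \<in> S \<and> y i \<ge> 1) \<and> x = (\<Sum>i<p. y i)))"

end

theory Submission
  imports Defs
begin

lemma bezout_sum:
  fixes a :: "nat \<Rightarrow> int"
  shows "\<exists>z. (\<Sum>i<n. z i * a i) = Gcd (a ` {..<n})"
proof (induction n)
  case 0
  then show ?case by simp
next
  case (Suc n)
  then obtain z where z: "(\<Sum>i<n. z i * a i) = Gcd (a ` {..<n})" by blast
  obtain u v where uv: "u * a n + v * Gcd (a ` {..<n}) = gcd (a n) (Gcd (a ` {..<n}))"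
    using bezout_int by blast
  define z' where "z' = (\<lambda>i. v * z i)(n := u)"
  have "(\<Sum>i<Suc n. z' i * a i) = u * a n + (\<Sum>i<n. v * z i * a i)"
    by (simp add: z'_def)
  also have "(\<Sum>i<n. v * z i * a i) = v * (\<Sum>i<n. z i * a i)"
    by (simp add: sum_distrib_left mult.assoc)
  finally have "(\<Sum>i<Suc n. z' i * a i) = gcd (a n) (Gcd (a ` {..<n}))"
    using z uv by simp
  then show ?case by (auto simp: lessThan_Suc)
qed

lemma sum_one_int:
  fixes f :: "nat \<Rightarrow> int"
  assumes "finite A" "\<forall>i\<in>A. f i \<ge> 0" "sum f A = 1"
  shows "\<exists>i\<in>A. f i = 1"
proof (rule ccontr)
  assume "\<not> ?thesis"
  have "\<forall>i\<in>A. f i \<le> 1"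
    using member_le_sum[of _ A f] assms by fastforce
  with \<open>\<not> ?thesis\<close> assms have "\<forall>i\<in>A. f i = 0" by force
  then have "sum f A = 0" by simp
  with assms show False by simp
qed

theorem proposition4p8:
  fixes n :: nat and lam :: "nat \<Rightarrow> nat"
  assumes "n \<ge> 1"
    and "\<forall>i<n. lam i > 0"
    and "quasinormal (gen_monoid n lam)"
  shows "1 + 1 / of_nat (Lcm (lam ` {..<n})) \<in> gen_monoid n lam"
proof -
  define L where "L = Lcm (lam ` {..<n})"
  define a where "a i = L div lam i" for i
  have dvdL: "lam i dvd L" if "i < n" for i
    unfolding L_def using that by (simp add: dvd_Lcm)
  have Lpos: "L > 0"
    proof -
    have "0 \<notin> lam ` {..<n}" using assms(2) by auto
    then have "L \<noteq> 0" unfolding L_def by (subst Lcm_0_iff_nat) auto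
    then show ?thesis by simp
  qed
  have La: "L = lam i * a i" if "i < n" for i
    unfolding a_def using dvdL[OF that] by simp
  have K: "(\<Sum>i<n. of_nat (c i) / of_nat (lam i)) * (of_nat L :: rat)
           = of_nat (\<Sum>i<n. c i * a i)" for c
  proof -
    have "(\<Sum>i<n. of_nat (c i) / of_nat (lam i)) * (of_nat L :: rat)
        = (\<Sum>i<n. of_nat (c i) / of_nat (lam i) * of_nat L)"
      by (simp add: sum_distrib_right)
    also have "\<dots> = (\<Sum>i<n. of_nat (c i * a i))"
    proof (rule sum.cong)
      fix i assume i: "i \<in> {..<n}"
      have lp: "(of_nat (lam i) :: rat) \<noteq> 0" using assms(2) i by simp
      show "of_nat (c i) / of_nat (lam i) * of_nat L = (of_nat (c i * a i) :: rat)"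
        using La[of i] i lp by (simp add: field_simps)
    qed simp
    finally show ?thesis by simp
  qed
  have memK: "\<exists>N. y * of_nat L = of_nat N" if "y \<in> gen_monoid n lam" for y
    using that K unfolding gen_monoid_def by blast
  define G where "G = Gcd ((\<lambda>i. int (a i)) ` {..<n})"
  obtain z where z: "(\<Sum>i<n. z i * int (a i)) = G"
    using bezout_sum[where n=n and a="\<lambda>i. int (a i)"] unfolding G_def by blast
  have G1: "G = 1"
  proof -
    have Gge: "G \<ge> 0" unfolding G_def by simp
    have Gdvd: "G dvd int (a i)" if "i < n" for i
      unfolding G_def using that by (simp add: Gcd_dvd)
    define g where "g = nat G"
    have gdvd: "g dvd a i" if "i < n" for i
      using Gdvd[OF that] Gge unfolding g_def
      by (metis int_dvd_int_iff nat_0_le)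
    have a0: "a 0 \<noteq> 0" using La[of 0] assms(1) Lpos by auto
    have g0: "g \<noteq> 0" using gdvd[of 0] a0 assms(1) by auto
    have gL: "g dvd L" using gdvd[of 0] La[of 0] assms(1) by simp
    have "lam i dvd L div g" if "i < n" for i
    proof -
      have "lam i * g dvd L" using gdvd[OF that] La[OF that] by (metis mult_dvd_mono dvd_refl)
      then show ?thesis using g0 gL by (simp add: dvd_div_iff_mult)
    qed
    then have "L dvd L div g" unfolding L_def by (auto intro: Lcm_least)
    moreover obtain m where m: "L = g * m" using gL by blast
    ultimately have "L dvd m" using g0 by simp
    moreover have "m > 0" using m Lpos by (cases m) auto
    ultimately have "L \<le> m" by (simp add: dvd_imp_le)
    then have "g * m \<le> 1 * m" using m by simp
    then have "g \<le> 1" using \<open>m > 0\<close> by (meson mult_le_cancel2 not_gr0)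
    then show ?thesis using g0 Gge unfolding g_def by linarith
  qed
  define c where "c i = nat (z i mod int L) + (if i = 0 then 2 * lam 0 else 0)" for i
  define T where "T = (\<Sum>i<n. c i * a i)"
  have Tint: "int T = (\<Sum>i<n. (z i mod int L) * int (a i)) + 2 * int L"
  proof -
    have "int T = (\<Sum>i<n. int (c i) * int (a i))" unfolding T_def by simp
    also have "\<dots> = (\<Sum>i<n. (z i mod int L) * int (a i) + (if i = 0 then 2 * int L else 0))"
    proof (rule sum.cong)
      fix i assume i: "i \<in> {..<n}"
      have "z i mod int L \<ge> 0" using Lpos by simp
      then show "int (c i) * int (a i) = (z i mod int L) * int (a i) + (if i = 0 then 2 * int L else 0)"
        using La[of 0] assms(1) i unfolding c_def by (auto simp: algebra_simps)
    qed simp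
    also have "\<dots> = (\<Sum>i<n. (z i mod int L) * int (a i)) + 2 * int L"
      using assms(1) by (simp add: sum.distrib)
    finally show ?thesis .
  qed
  have modeq: "(\<Sum>i<n. (z i mod int L) * int (a i)) mod int L = (\<Sum>i<n. z i * int (a i)) mod int L"
  proof -
    have "(\<Sum>i<n. (z i mod int L) * int (a i)) mod int L
        = (\<Sum>i<n. (z i mod int L) * int (a i) mod int L) mod int L"
      by (simp add: mod_sum_eq)
    also have "\<dots> = (\<Sum>i<n. z i * int (a i) mod int L) mod int L"
      by (simp add: mod_mult_left_eq)
    also have "\<dots> = (\<Sum>i<n. z i * int (a i)) mod int L"
      by (simp add: mod_sum_eq)
    finally show ?thesis .
  qed
  have "int T mod int L = 1 mod int L"
  proof -
    have "int T = (\<Sum>i<n. (z i mod int L) * int (a i)) + 2 * int L" by (rule Tint)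
    then have "int T mod int L = (\<Sum>i<n. (z i mod int L) * int (a i)) mod int L"
      by simp
    then show ?thesis using modeq z G1 by simp
  qed
  then have "int L dvd int T - 1" by (simp add: mod_eq_dvd_iff)
  then obtain k where k: "int T - 1 = int L * k" by blast
  have S0: "(\<Sum>i<n. (z i mod int L) * int (a i)) \<ge> 0"
    using Lpos by (intro sum_nonneg) simp
  have k1: "k \<ge> 1"
  proof (rule ccontr)
    assume "\<not> k \<ge> 1"
    then have "int L * k \<le> 0" using Lpos by (simp add: mult_nonneg_nonpos)
    with k Tint S0 Lpos show False by linarith
  qed
  define p where "p = nat k"
  have "int p = k" using k1 unfolding p_def by simp
  then have "int T = int (p * L + 1)" using k by (simp add: algebra_simps)
  then have Tp: "T = p * L + 1" by (simp only: of_nat_eq_iff)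
  define x where "x = (\<Sum>i<n. of_nat (c i) / of_nat (lam i) :: rat)"
  have xmem: "x \<in> gen_monoid n lam" unfolding x_def gen_monoid_def by blast
  have Lq: "(of_nat L :: rat) > 0" using Lpos by simp
  have xL: "x * of_nat L = of_nat p * of_nat L + 1"
    using K[of c] Tp unfolding x_def T_def by simp
  then have xeq: "x = of_nat p + 1 / of_nat L" using Lq by (simp add: field_simps)
  have p0: "p > 0" using k1 unfolding p_def by simp
  have "x \<ge> of_nat p" using xeq Lq by simp
  then obtain y where y: "\<forall>i<p. y i \<in> gen_monoid n lam \<and> y i \<ge> 1" and ys: "x = (\<Sum>i<p. y i)"
    using assms(3) xmem p0 unfolding quasinormal_def by blast
  have "\<forall>i\<in>{..<p}. \<exists>N. y i * of_nat L = of_nat N" using y memK by blast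
  then obtain N where N: "\<forall>i\<in>{..<p}. y i * of_nat L = of_nat (N i)" by metis
  have NL: "int (N i) - int L \<ge> 0" if "i < p" for i
  proof -
    have "y i * of_nat L \<ge> 1 * of_nat L"
      using y that Lq by (intro mult_right_mono) auto
    then have "(of_nat (N i) :: rat) \<ge> of_nat L" using N that by simp
    then show ?thesis by simp
  qed
  have "(\<Sum>i<p. y i * of_nat L) = of_nat p * of_nat L + 1"
    using xL ys by (simp add: sum_distrib_right)
  then have "(\<Sum>i<p. (of_nat (N i) :: rat)) = of_nat p * of_nat L + 1"
    using N by simp
  then have "(of_int (\<Sum>i<p. int (N i)) :: rat) = of_int (int p * int L + 1)"
    by simp
  then have "(\<Sum>i<p. int (N i)) = int p * int L + 1"
    by (simp only: of_int_eq_iff)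
  then have "(\<Sum>i<p. int (N i) - int L) = 1"
    by (simp add: sum_subtractf)
  then obtain i where i: "i < p" "int (N i) - int L = 1"
    using sum_one_int[of "{..<p}" "\<lambda>i. int (N i) - int L"] NL by auto
  have "N i = L + 1" using i by linarith
  then have "y i * of_nat L = of_nat L + 1" using N i by simp
  then have "y i = 1 + 1 / of_nat L" using Lq by (simp add: field_simps)
  then show ?thesis using y i unfolding L_def by auto
qed

end
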